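(* Assume A2 and let $n\ge 1$. Then $$y_{10^{n-1}}<y_{010^{n-1}}<y_{10^n}\qquad\text{and}\qquad y_{01^n}<y_{101^{n-1}}<y_{01^{n-1}},$$ where $0^k$, $1^k$ denote $k$-fold repetitions of a letter and $0^0=1^0=\epsilon$ (so e.g. $y_{10^0}=y_1$).
   Context: Words are finite strings over $\{0,1\}$; $\epsilon$ is the empty word. Let $\mathcal I\subseteq\mathbb R$ be an interval and $\phi_0,\phi_1:\mathcal I\to\mathcal I$. For a word $w$ put $\phi_w:=\phi_{w_{|w|}}\circ\cdots\circ\phi_{w_1}$ (the first letter is applied first), $\phi_\epsilon=\mathrm{id}$. Assumption A2: for all $x<y$ in $\mathcal I$ and $k\in\{0,1\}$, $\phi_k(x)<\phi_k(y)$ and $\phi_k(y)-\phi_k(x)<y-x$; moreover $\phi_0,\phi_1$ have fixed points $y_0,y_1\in\mathcal I$ with $y_1<y_0$. Under A2, for every non-empty word $w$ the map $\phi_w$ has a unique fixed point in $\mathcal I$, denoted $y_w$. *)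

theory Defs
  imports "HOL-Analysis.Analysis"
begin

text \<open>Words over {0,1} are lists of booleans: False = letter 0, True = letter 1.
  The pair of maps (phi_0, phi_1) is a single function phi :: bool => real => real.\<close>

type_synonym word = "bool list"

text \<open>phi_w: the first letter is applied first.\<close>
definition phiw :: "(bool \<Rightarrow> real \<Rightarrow> real) \<Rightarrow> word \<Rightarrow> real \<Rightarrow> real" where
  "phiw phi w x = foldl (\<lambda>z b. phi b z) x w"

definition A2 :: "real set \<Rightarrow> (bool \<Rightarrow> real \<Rightarrow> real) \<Rightarrow> bool" where
  "A2 I phi \<longleftrightarrow>
     is_interval I \<and>
     (\<forall>k. \<forall>x\<in>I. phi k x \<in> I) \<and>
     (\<forall>k. \<forall>x\<in>I. \<forall>y\<in>I. x < y \<longrightarrow> phi k x < phi k y \<and> phi k y - phi k x < y - x) \<and>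
     (\<exists>y0\<in>I. \<exists>y1\<in>I. phi False y0 = y0 \<and> phi True y1 = y1 \<and> y1 < y0)"

text \<open>The (unique, under A2) fixed point of phi_w in I.\<close>
definition yw :: "real set \<Rightarrow> (bool \<Rightarrow> real \<Rightarrow> real) \<Rightarrow> word \<Rightarrow> real" where
  "yw I phi w = (THE y. y \<in> I \<and> phiw phi w y = y)"

end

theory Submission
  imports Defs
begin

lemma phiw_Nil[simp]: "phiw phi [] x = x" by (simp add: phiw_def)
lemma phiw_Cons[simp]: "phiw phi (b#w) x = phiw phi w (phi b x)" by (simp add: phiw_def)
lemma phiw_append: "phiw phi (u@v) x = phiw phi v (phiw phi u x)" by (simp add: phiw_def)

lemma phiw_rep_fix: "phi k y = y \<Longrightarrow> phiw phi (replicate m k) y = y"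
  by (induct m) (simp_all add: replicate_append_same[symmetric] phiw_append del: replicate.simps(2)
       add: replicate_Suc)

lemma A2_in: "A2 I phi \<Longrightarrow> x \<in> I \<Longrightarrow> phi k x \<in> I" by (simp add: A2_def)
lemma A2_mono: "A2 I phi \<Longrightarrow> x \<in> I \<Longrightarrow> y \<in> I \<Longrightarrow> x < y \<Longrightarrow> phi k x < phi k y \<and> phi k y - phi k x < y - x"
  by (simp add: A2_def)

lemma phiw_in: "A2 I phi \<Longrightarrow> x \<in> I \<Longrightarrow> phiw phi w x \<in> I"
  by (induct w arbitrary: x) (auto simp: A2_in)

lemma phiw_mono: "A2 I phi \<Longrightarrow> x \<in> I \<Longrightarrow> y \<in> I \<Longrightarrow> x < y \<Longrightarrow>
   phiw phi w x < phiw phi w y \<and> phiw phi w y - phiw phi w x \<le> y - x \<and>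
   (w \<noteq> [] \<longrightarrow> phiw phi w y - phiw phi w x < y - x)"
proof (induct w arbitrary: x y)
  case Nil then show ?case by simp
next
  case (Cons b w)
  have m: "phi b x < phi b y \<and> phi b y - phi b x < y - x" using A2_mono Cons by blast
  have "phi b x \<in> I" "phi b y \<in> I" using Cons A2_in by auto
  with Cons.hyps[of "phi b x" "phi b y"] m Cons.prems show ?case by auto
qed

lemma phiw_inj: "A2 I phi \<Longrightarrow> x \<in> I \<Longrightarrow> y \<in> I \<Longrightarrow> phiw phi w x = phiw phi w y \<Longrightarrow> x = y"
  by (metis linorder_neq_iff phiw_mono less_irrefl)

lemma cmp_fix:
  fixes f :: "real \<Rightarrow> real"
  assumes h: "\<forall>x\<in>I. \<forall>y\<in>I. x<y \<longrightarrow> f x < f y \<and> f y - f x < y - x"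
    and "p\<in>I" "f p = p" "x\<in>I"
  shows "(x < p \<longleftrightarrow> x < f x) \<and> (p < x \<longleftrightarrow> f x < x)"
proof -
  have 1: "x < f x" if "x < p"
  proof -
    have "f p - f x < p - x" using h assms(2,4) that by blast
    then show ?thesis using assms(3) by linarith
  qed
  have 2: "f x < x" if "p < x"
  proof -
    have "f x - f p < x - p" using h assms(2,4) that by blast
    then show ?thesis using assms(3) by linarith
  qed
  show ?thesis using 1 2 assms(3) by (cases x p rule: linorder_cases) auto
qed

lemma is_int: "A2 I phi \<Longrightarrow> a \<in> I \<Longrightarrow> b \<in> I \<Longrightarrow> a \<le> x \<Longrightarrow> x \<le> b \<Longrightarrow> x \<in> I"
  unfolding A2_def is_interval_1 by blast

lemma yw_props:
  assumes A: "A2 I phi" and w: "w \<noteq> []"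
    and y0: "y0 \<in> I" "phi False y0 = y0" and y1: "y1 \<in> I" "phi True y1 = y1" "y1 < y0"
  shows "yw I phi w \<in> I \<and> phiw phi w (yw I phi w) = yw I phi w \<and> y1 \<le> yw I phi w \<and> yw I phi w \<le> y0
     \<and> (\<forall>x\<in>I. (x < yw I phi w \<longleftrightarrow> x < phiw phi w x) \<and> (yw I phi w < x \<longleftrightarrow> phiw phi w x < x))"
proof -
  have sub: "{y1..y0} \<subseteq> I" using is_int[OF A y1(1) y0(1)] by auto
  have py1: "phi False y1 > y1" using A2_mono[where k=False, OF A y1(1) y0(1) y1(3)] y0(2) by linarith
  have py0: "phi True y0 < y0" using A2_mono[where k=True, OF A y1(1) y0(1) y1(3)] y1(2) by linarith
  have inv: "phi k x \<in> {y1..y0}" if "x \<in> {y1..y0}" for k x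
  proof -
    have xI: "x \<in> I" using that sub by blast
    have a1: "phi k y1 \<le> phi k x"
    proof (cases "y1 = x")
      case False then have "y1 < x" using that by simp
      then show ?thesis using A2_mono[OF A y1(1) xI] by (simp add: less_imp_le)
    qed simp
    have a2: "phi k x \<le> phi k y0"
    proof (cases "x = y0")
      case False then have "x < y0" using that by simp
      then show ?thesis using A2_mono[OF A xI y0(1)] by (simp add: less_imp_le)
    qed simp
    have "phi k y1 \<ge> y1" using py1 y1(2) by (cases k) auto
    moreover have "phi k y0 \<le> y0" using py0 y0(2) by (cases k) auto
    ultimately show ?thesis using a1 a2 by simp
  qed
  have invw: "phiw phi v x \<in> {y1..y0}" if "x \<in> {y1..y0}" for v x
    using that
  proof (induct v arbitrary: x)
    case (Cons a v)
    then show ?case using inv[of x a] by simp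
  qed simp
  have lip: "\<bar>phiw phi w x - phiw phi w z\<bar> \<le> \<bar>x - z\<bar>" if "x \<in> I" "z \<in> I" for x z
  proof (cases x z rule: linorder_cases)
    case less
    then have "phiw phi w x < phiw phi w z" "phiw phi w z - phiw phi w x \<le> z - x"
      using phiw_mono[OF A that less] by blast+
    then show ?thesis using less by linarith
  next
    case greater
    then have "phiw phi w z < phiw phi w x" "phiw phi w x - phiw phi w z \<le> x - z"
      using phiw_mono[OF A that(2,1) greater] by blast+
    then show ?thesis using greater by linarith
  qed simp
  have contw: "continuous_on {y1..y0} (phiw phi w)"
    unfolding continuous_on_iff
  proof (intro ballI allI impI)
    fix x e assume x: "x \<in> {y1..y0}" and e: "(0::real) < e"
    show "\<exists>d>0. \<forall>x'\<in>{y1..y0}. dist x' x < d \<longrightarrow> dist (phiw phi w x') (phiw phi w x) < e"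
    proof (intro exI[of _ e] conjI ballI impI)
      fix x' assume x': "x' \<in> {y1..y0}" "dist x' x < e"
      have "\<bar>phiw phi w x' - phiw phi w x\<bar> \<le> \<bar>x' - x\<bar>" using lip x x' sub by blast
      then show "dist (phiw phi w x') (phiw phi w x) < e" using x'(2) by (simp add: dist_real_def)
    qed (rule e)
  qed
  have cont: "continuous_on {y1..y0} (\<lambda>x. x - phiw phi w x)"
    using contw by (intro continuous_intros)
  have g1: "y1 - phiw phi w y1 \<le> 0" using invw[of y1] y1(3) by simp
  have g0: "0 \<le> y0 - phiw phi w y0" using invw[of y0] y1(3) by simp
  obtain p where p: "y1 \<le> p" "p \<le> y0" "p - phiw phi w p = 0"
    using IVT'[of "\<lambda>x. x - phiw phi w x", OF g1 g0 less_imp_le[OF y1(3)] cont] by blast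
  have pI: "p \<in> I" using p sub by auto
  have pf: "phiw phi w p = p" using p(3) by simp
  have h: "\<forall>x\<in>I. \<forall>y\<in>I. x<y \<longrightarrow> phiw phi w x < phiw phi w y \<and> phiw phi w y - phiw phi w x < y - x"
    using phiw_mono[OF A] w by blast
  note cf = cmp_fix[OF h pI pf]
  have eq: "yw I phi w = p"
    unfolding yw_def
  proof (rule the_equality)
    show "p \<in> I \<and> phiw phi w p = p" using pI pf by simp
    fix y assume y: "y \<in> I \<and> phiw phi w y = y"
    then show "y = p" using cf[of y] by (cases y p rule: linorder_cases) auto
  qed
  show ?thesis unfolding eq using pI pf p(1,2) cf by blast
qed

theorem mainTheorem5:
  fixes I :: "real set" and phi :: "bool \<Rightarrow> real \<Rightarrow> real" and n :: nat
  assumes "A2 I phi" and "n \<ge> 1"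
  shows "yw I phi ([True] @ replicate (n - 1) False)
           < yw I phi ([False, True] @ replicate (n - 1) False)
         \<and> yw I phi ([False, True] @ replicate (n - 1) False)
           < yw I phi ([True] @ replicate n False)
         \<and> yw I phi ([False] @ replicate n True)
           < yw I phi ([True, False] @ replicate (n - 1) True)
         \<and> yw I phi ([True, False] @ replicate (n - 1) True)
           < yw I phi ([False] @ replicate (n - 1) True)"
proof -
  note A = assms(1)
  obtain m where n: "n = Suc m" using assms(2) by (cases n) auto
  obtain y0 y1 where y0: "y0 \<in> I" "phi False y0 = y0" and y1: "y1 \<in> I" "phi True y1 = y1" "y1 < y0"
    using A unfolding A2_def by blast
  note Y = yw_props[OF A _ y0 y1]
  have f0: "\<forall>x\<in>I. \<forall>y\<in>I. x<y \<longrightarrow> phi False x < phi False y \<and> phi False y - phi False x < y - x"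
    and f1: "\<forall>x\<in>I. \<forall>y\<in>I. x<y \<longrightarrow> phi True x < phi True y \<and> phi True y - phi True x < y - x"
    using A2_mono[OF A] by blast+
  note c0 = cmp_fix[OF f0 y0] and c1 = cmp_fix[OF f1 y1(1,2)]
  have p0: "phi False y1 \<noteq> y1" using c0[OF y1(1)] y1 by auto
  have p1: "phi True y0 \<noteq> y0" using c1[OF y0(1)] y1 by auto
  define p where "p = True # replicate m False"
  define q where "q = False # replicate m True"
  have pfix: "phiw phi p y0 \<noteq> y0"
  proof
    assume "phiw phi p y0 = y0"
    hence "phiw phi (replicate m False) (phi True y0) = phiw phi (replicate m False) y0"
      using phiw_rep_fix[of phi False y0 m] y0 by (simp add: p_def)
    then show False using phiw_inj[OF A A2_in[OF A y0(1)] y0(1)] p1 by blast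
  qed
  have qfix: "phiw phi q y1 \<noteq> y1"
  proof
    assume "phiw phi q y1 = y1"
    hence "phiw phi (replicate m True) (phi False y1) = phiw phi (replicate m True) y1"
      using phiw_rep_fix[of phi True y1 m] y1 by (simp add: q_def)
    then show False using phiw_inj[OF A A2_in[OF A y1(1)] y1(1)] p0 by blast
  qed
  have w1: "[True] @ replicate (n - 1) False = p" "[False, True] @ replicate (n - 1) False = False # p"
    "[True] @ replicate n False = p @ [False]"
    "[False] @ replicate n True = q @ [True]" "[True, False] @ replicate (n - 1) True = True # q"
    "[False] @ replicate (n - 1) True = q"
    by (simp_all add: n p_def q_def replicate_append_same)
  define a where "a = yw I phi p"
  define b where "b = yw I phi (False # p)"
  define c where "c = yw I phi (p @ [False])"
  define d where "d = yw I phi (q @ [True])"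
  define e where "e = yw I phi (True # q)"
  define f where "f = yw I phi q"
  have a: "a \<in> I" "phiw phi p a = a" "a \<le> y0" "\<forall>x\<in>I. (x < a \<longleftrightarrow> x < phiw phi p x)"
    using Y[of p] unfolding a_def p_def by auto
  have b: "b \<in> I" "phiw phi (False#p) b = b" "b \<le> y0" "\<forall>x\<in>I. (x < b \<longleftrightarrow> x < phiw phi (False#p) x)"
    using Y[of "False#p"] unfolding b_def by auto
  have c: "c \<in> I" "\<forall>x\<in>I. phiw phi (p@[False]) x = x \<longrightarrow> x = c"
  proof -
    have H: "c \<in> I \<and> (\<forall>x\<in>I. (x < c \<longleftrightarrow> x < phiw phi (p@[False]) x) \<and> (c < x \<longleftrightarrow> phiw phi (p@[False]) x < x))"
      using Y[of "p@[False]"] unfolding c_def by simp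
    then show "c \<in> I" by simp
    show "\<forall>x\<in>I. phiw phi (p@[False]) x = x \<longrightarrow> x = c"
    proof (intro ballI impI)
      fix x assume x: "x \<in> I" "phiw phi (p@[False]) x = x"
      then have "\<not> x < c" "\<not> c < x" using H by auto
      then show "x = c" by linarith
    qed
  qed
  have e: "e \<in> I" "phiw phi (True#q) e = e" "y1 \<le> e" "\<forall>x\<in>I. (e < x \<longleftrightarrow> phiw phi (True#q) x < x)"
    using Y[of "True#q"] unfolding e_def by auto
  have f: "f \<in> I" "phiw phi q f = f" "y1 \<le> f"
    using Y[of q] unfolding f_def q_def by auto
  have d: "d \<in> I" "\<forall>x\<in>I. phiw phi (q@[True]) x = x \<longrightarrow> x = d"
  proof -
    have H: "d \<in> I \<and> (\<forall>x\<in>I. (x < d \<longleftrightarrow> x < phiw phi (q@[True]) x) \<and> (d < x \<longleftrightarrow> phiw phi (q@[True]) x < x))"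
      using Y[of "q@[True]"] unfolding d_def by simp
    then show "d \<in> I" by simp
    show "\<forall>x\<in>I. phiw phi (q@[True]) x = x \<longrightarrow> x = d"
    proof (intro ballI impI)
      fix x assume x: "x \<in> I" "phiw phi (q@[True]) x = x"
      then have "\<not> x < d" "\<not> d < x" using H by auto
      then show "x = d" by linarith
    qed
  qed
  have ay0: "a < y0" using a pfix by (metis order_less_le)
  have bfix: "phiw phi (False#p) y0 \<noteq> y0" using pfix y0 by simp
  have by0: "b < y0" using b bfix by (metis order_less_le)
  have ab: "a < b"
  proof -
    have "a < phi False a" using c0[OF a(1)] ay0 by auto
    hence "phiw phi p a < phiw phi p (phi False a)"
      using phiw_mono[OF A a(1) A2_in[OF A a(1)]] by blast
    thus ?thesis using b(4) a by simp
  qed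
  have bc: "b < c"
  proof -
    have "phiw phi (p@[False]) (phi False b) = phi False b"
      using b(2) by (simp add: phiw_append)
    hence "phi False b = c" using c(2) A2_in[OF A b(1)] by blast
    moreover have "b < phi False b" using c0[OF b(1)] by0 by auto
    ultimately show ?thesis by simp
  qed
  have efix: "phiw phi (True#q) y1 \<noteq> y1" using qfix y1 by simp
  have ey1: "y1 < e" using e efix by (metis order_less_le)
  have fy1: "y1 < f" using f qfix by (metis order_less_le)
  have de: "d < e"
  proof -
    have "phiw phi (q@[True]) (phi True e) = phi True e"
      using e(2) by (simp add: phiw_append)
    hence "phi True e = d" using d(2) A2_in[OF A e(1)] by blast
    moreover have "phi True e < e" using c1[OF e(1)] ey1 by auto
    ultimately show ?thesis by simp
  qed
  have ef: "e < f"
  proof -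
    have "phi True f < f" using c1[OF f(1)] fy1 by auto
    hence "phiw phi q (phi True f) < phiw phi q f"
      using phiw_mono[OF A A2_in[OF A f(1)] f(1)] by blast
    thus ?thesis using e(4) f by simp
  qed
  show ?thesis unfolding w1 using ab bc de ef a_def b_def c_def d_def e_def f_def by simp
qed

end
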